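(* Suppose that for each cell $I_i$ there is a quadrature rule $Q_i^k(v)=\sum_{j=0}^{k+1}A_{i,j}v(x_{i,j})$ on the subdivision points satisfying (1) $\int_{I_i}v\,dx=Q_i^k(v)$ for all $v\in\mathbb P^{2k-1}(I_i)$ and (2) $\frac{h_i}{2k-1}-Q_i^k(L_{i,k+1}L_{i,k-1})>0$. Then such quadrature rules can be chosen with $A_{i,0}=0$ for all $i$ (the upwind condition) if and only if, in each $I_i$, the subdivision points $x_{i,1},\dots,x_{i,k}$ are the $k$ distinct zeros of $$p_i^k=L_{i,k}+\frac{c}{k(1-c)}\,(x-x_{i-\frac12})\,L_{i,k}'$$ for some constant $c<1$.
   Context: $I_i=[x_{i-\frac12},x_{i+\frac12}]$ are the cells of a partition of an interval, $h_i=x_{i+\frac12}-x_{i-\frac12}$, $k\ge1$. Each $I_i$ has subdivision points $x_{i-\frac12}=x_{i,0}<x_{i,1}<\dots<x_{i,k}<x_{i,k+1}=x_{i+\frac12}$. $L_{i,\ell}$ denotes the shifted Legendre polynomial of degree $\ell$ on $I_i$ (the Legendre polynomial $P_\ell$ composed with the affine map of $I_i$ onto $[-1,1]$), so $L_{i,\ell}(x_{i+\frac12})=1$, $L_{i,\ell}(x_{i-\frac12})=(-1)^\ell$ and $\int_{I_i}L_{i,\ell}L_{i,m}\,dx=\delta_{\ell m}h_i/(2\ell+1)$; $L_{i,k}'$ is its derivative. *)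

theory Defs
  imports "HOL-Analysis.Analysis" "HOL-Computational_Algebra.Polynomial"
begin

fun legendre :: "nat \<Rightarrow> real \<Rightarrow> real" where
  "legendre 0 t = 1"
| "legendre (Suc 0) t = t"
| "legendre (Suc (Suc n)) t =
     ((2 * real n + 3) * t * legendre (Suc n) t - (real n + 1) * legendre n t) / (real n + 2)"

definition shifted_legendre :: "real \<Rightarrow> real \<Rightarrow> nat \<Rightarrow> real \<Rightarrow> real" where
  "shifted_legendre a b l x = legendre l ((2 * x - a - b) / (b - a))"

definition quad :: "nat \<Rightarrow> (nat \<Rightarrow> real) \<Rightarrow> (nat \<Rightarrow> real) \<Rightarrow> (real \<Rightarrow> real) \<Rightarrow> real" where
  "quad k xs A v = (\<Sum>j = 0..k+1. A j * v (xs j))"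

definition admissible_rule :: "real \<Rightarrow> real \<Rightarrow> (nat \<Rightarrow> real) \<Rightarrow> nat \<Rightarrow> (nat \<Rightarrow> real) \<Rightarrow> bool" where
  "admissible_rule a b xs k A \<longleftrightarrow>
     (\<forall>p :: real poly. degree p \<le> 2 * k - 1 \<longrightarrow>
        integral {a..b} (poly p) = quad k xs A (poly p))
   \<and> (b - a) / (2 * real k - 1)
       - quad k xs A (\<lambda>y. shifted_legendre a b (k + 1) y * shifted_legendre a b (k - 1) y) > 0"

definition p_poly :: "real \<Rightarrow> real \<Rightarrow> nat \<Rightarrow> real \<Rightarrow> real \<Rightarrow> real" where
  "p_poly a b k c y = shifted_legendre a b k y
     + c / (real k * (1 - c)) * (y - a) * deriv (shifted_legendre a b k) y"

end

theory Submission
  imports Defs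
begin

fun Lp :: "nat \<Rightarrow> real poly" where
  "Lp 0 = 1"
| "Lp (Suc 0) = [:0,1:]"
| "Lp (Suc (Suc n)) = smult (1/(real n + 2))
     (smult (2*real n+3) ([:0,1:] * Lp (Suc n)) - smult (real n + 1) (Lp n))"

lemma poly_Lp: "poly (Lp n) t = legendre n t"
  by (induction n rule: Lp.induct) (auto simp: field_simps)

lemma Lp_rec: "(real n + 2) * poly (Lp (Suc (Suc n))) t
   = (2*real n+3) * t * poly (Lp (Suc n)) t - (real n + 1) * poly (Lp n) t"
  by (simp add: field_simps)

lemma Lp_one: "poly (Lp n) 1 = 1"
  by (induction n rule: Lp.induct) (auto simp: field_simps)

lemma Lp_deg: "degree (Lp n) = n \<and> coeff (Lp n) n > 0"
proof (induction n rule: Lp.induct)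
  case 1 then show ?case by simp
next
  case 2 then show ?case by simp
next
  case (3 n)
  have d1: "degree (Lp (Suc n)) = Suc n" and c1: "coeff (Lp (Suc n)) (Suc n) > 0" using 3 by auto
  have d0: "degree (Lp n) = n" using 3 by auto
  let ?q = "smult (2*real n+3) ([:0,1:] * Lp (Suc n)) - smult (real n + 1) (Lp n)"
  have cq: "coeff ?q (Suc (Suc n)) = (2*real n+3) * coeff (Lp (Suc n)) (Suc n)"
    using d0 by (simp add: coeff_eq_0)
  have dq: "degree ?q \<le> Suc (Suc n)"
    by (rule degree_diff_le) (auto intro!: order.trans[OF degree_mult_le] simp: d1 d0)
  have "coeff (Lp (Suc (Suc n))) (Suc (Suc n)) = (1/(real n + 2)) * ((2*real n+3) * coeff (Lp (Suc n)) (Suc n))"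
    using cq by simp
  also have "\<dots> > 0" using c1 by (intro mult_pos_pos divide_pos_pos) auto
  finally have pos: "coeff (Lp (Suc (Suc n))) (Suc (Suc n)) > 0" .
  have "degree (Lp (Suc (Suc n))) \<le> Suc (Suc n)" using dq by simp
  moreover have "degree (Lp (Suc (Suc n))) \<ge> Suc (Suc n)"
    apply (rule le_degree) using pos by (metis order_less_irrefl)
  ultimately have dd: "degree (Lp (Suc (Suc n))) = Suc (Suc n)" by (rule le_antisym)
  show ?case by (intro conjI dd pos)
qed

lemma Lp_nz: "Lp n \<noteq> 0"
  using Lp_deg[of n] by auto

abbreviation "D n t \<equiv> poly (pderiv (Lp n)) t"
abbreviation "P n t \<equiv> poly (Lp n) t"

lemma D_rec: "(real n + 2) * D (Suc (Suc n)) t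
   = (2*real n+3) * (P (Suc n) t + t * D (Suc n) t) - (real n + 1) * D n t"
  by (simp add: pderiv_smult pderiv_diff pderiv_mult pderiv_pCons field_simps)

lemma CD: "D (Suc m) t = t * D m t + (real m + 1) * P m t \<and>
           t * D (Suc m) t - D m t = (real m + 1) * P (Suc m) t"
proof (induction m)
  case 0 then show ?case by (simp add: pderiv_pCons)
next
  case (Suc m)
  have C: "D (Suc m) t = t * D m t + (real m + 1) * P m t"
   and Dd: "t * D (Suc m) t - D m t = (real m + 1) * P (Suc m) t" using Suc by auto
  have r: "(real m + 2) * D (Suc (Suc m)) t
   = (2*real m+3) * (P (Suc m) t + t * D (Suc m) t) - (real m + 1) * D m t" by (rule D_rec)
  have Dm: "D m t = t * D (Suc m) t - (real m + 1) * P (Suc m) t" using Dd by simp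
  have "(real m + 2) * D (Suc (Suc m)) t = (2*real m+3) * (P (Suc m) t + t * D (Suc m) t) - (real m + 1) * (t * D (Suc m) t - (real m + 1) * P (Suc m) t)"
    using r Dm by simp
  also have "\<dots> = (real m + 2) * (t * D (Suc m) t + (real m + 2) * P (Suc m) t)"
    by algebra
  finally have "(real m + 2) * D (Suc (Suc m)) t = (real m + 2) * (t * D (Suc m) t + (real m + 2) * P (Suc m) t)" .
  hence C2: "D (Suc (Suc m)) t = t * D (Suc m) t + (real (Suc m) + 1) * P (Suc m) t"
    by simp
  have A: "(t*t - 1) * D (Suc m) t = (real m + 1) * (t * P (Suc m) t - P m t)"
  proof -
    have "t * t * D (Suc m) t = t * D m t + (real m + 1) * t * P (Suc m) t"
    proof -
      have e: "t * D (Suc m) t = D m t + (real m + 1) * P (Suc m) t" using Dd by simp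
      have "t * (t * D (Suc m) t) = t * (D m t + (real m + 1) * P (Suc m) t)" by (simp only: e)
      then show ?thesis by (simp add: algebra_simps)
    qed
    then show ?thesis using C by (simp add: algebra_simps)
  qed
  have rr: "(real m + 2) * P (Suc (Suc m)) t = (2*real m+3) * t * P (Suc m) t - (real m + 1) * P m t"
    by (rule Lp_rec)
  have "t * D (Suc (Suc m)) t - D (Suc m) t = (t*t-1) * D (Suc m) t + (real m + 2) * t * P (Suc m) t"
    using C2 by (simp add: algebra_simps)
  also have "\<dots> = (real m + 2) * P (Suc (Suc m)) t"
    unfolding A rr by (simp add: algebra_simps)
  finally have X: "t * D (Suc (Suc m)) t - D (Suc m) t = (real m + 2) * P (Suc (Suc m)) t" .
  have e2: "real (Suc m) + 1 = real m + 2" by simp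
  show ?case using C2 X unfolding e2 by blast
qed

lemma A_id: "(t*t - 1) * D (Suc m) t = (real m + 1) * (t * P (Suc m) t - P m t)"
proof -
  have C: "D (Suc m) t = t * D m t + (real m + 1) * P m t"
   and Dd: "t * D (Suc m) t - D m t = (real m + 1) * P (Suc m) t" using CD[of m t] by auto
  have "t * t * D (Suc m) t = t * D m t + (real m + 1) * t * P (Suc m) t"
  proof -
    have e: "t * D (Suc m) t = D m t + (real m + 1) * P (Suc m) t" using Dd by simp
    have "t * (t * D (Suc m) t) = t * (D m t + (real m + 1) * P (Suc m) t)" by (simp only: e)
    then show ?thesis by (simp add: algebra_simps)
  qed
  then show ?thesis using C by (simp add: algebra_simps)
qed

lemma A_poly: "[:-1,0,1:] * pderiv (Lp (Suc m)) = smult (real m + 1) ([:0,1:] * Lp (Suc m) - Lp m)"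
proof (rule poly_eq_poly_eq_iff[THEN iffD1], rule ext)
  fix t
  show "poly ([:-1,0,1:] * pderiv (Lp (Suc m))) t = poly (smult (real m + 1) ([:0,1:] * Lp (Suc m) - Lp m)) t"
    using A_id[of t m] by (simp add: algebra_simps)
qed

lemma ODE: "pderiv ([:-1,0,1:] * pderiv (Lp n)) = smult (real n * (real n + 1)) (Lp n)"
proof (cases n)
  case 0 then show ?thesis by simp
next
  case (Suc m)
  show ?thesis unfolding Suc A_poly
  proof (rule poly_eq_poly_eq_iff[THEN iffD1], rule ext)
    fix t
    have Dd: "t * D (Suc m) t - D m t = (real m + 1) * P (Suc m) t" using CD[of m t] by auto
    show "poly (pderiv (smult (real m + 1) ([:0, 1:] * Lp (Suc m) - Lp m))) t =
      poly (smult (real (Suc m) * (real (Suc m) + 1)) (Lp (Suc m))) t"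
      using Dd by (simp add: pderiv_smult pderiv_diff pderiv_mult pderiv_pCons algebra_simps)
  qed
qed

lemma rec_all: "smult (real j + 1) (Lp (Suc j)) = smult (2*real j+1) ([:0,1:]*Lp j) - smult (real j) (Lp (j-1))"
proof (cases j)
  case 0 then show ?thesis by simp
next
  case (Suc n)
  show ?thesis
  proof (rule poly_eq_poly_eq_iff[THEN iffD1], rule ext)
    fix t
    show "poly (smult (real j + 1) (Lp (Suc j))) t = poly (smult (2*real j+1) ([:0,1:]*Lp j) - smult (real j) (Lp (j-1))) t"
      using Lp_rec[of n t] unfolding Suc by (simp add: algebra_simps)
  qed
qed

definition Iv :: "real \<Rightarrow> real \<Rightarrow> real poly \<Rightarrow> real" where
  "Iv a b p = integral {a..b} (poly p)"

lemma poly_integrable: "poly (p::real poly) integrable_on {a..b}"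
proof -
  have "continuous_on {a..b} (\<lambda>x. poly p x)"
    by (rule continuous_on_poly) (rule continuous_on_id)
  then show ?thesis by (intro integrable_continuous_interval) simp
qed

lemma poly_fun_add: "poly (p + (q::real poly)) = (\<lambda>x. poly p x + poly q x)" by auto
lemma poly_fun_diff: "poly (p - (q::real poly)) = (\<lambda>x. poly p x - poly q x)" by auto
lemma poly_fun_minus: "poly (- (p::real poly)) = (\<lambda>x. - poly p x)" by auto
lemma poly_fun_smult: "poly (smult c (p::real poly)) = (\<lambda>x. c * poly p x)" by auto
lemma poly_fun_zero: "poly (0::real poly) = (\<lambda>x. 0)" by auto
lemma poly_fun_sum: "poly (\<Sum>i\<in>A. (f i::real poly)) = (\<lambda>x. \<Sum>i\<in>A. poly (f i) x)" by (auto simp: poly_sum)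

lemma Iv_add: "Iv a b (p + q) = Iv a b p + Iv a b q"
  unfolding Iv_def poly_fun_add by (rule integral_add) (rule poly_integrable)+
lemma Iv_diff: "Iv a b (p - q) = Iv a b p - Iv a b q"
  unfolding Iv_def poly_fun_diff by (rule integral_diff) (rule poly_integrable)+
lemma Iv_minus: "Iv a b (- p) = - Iv a b p"
  unfolding Iv_def poly_fun_minus by (rule integral_neg)
lemma Iv_smult: "Iv a b (smult c p) = c * Iv a b p"
  unfolding Iv_def poly_fun_smult by simp
lemma Iv_sum: "finite A \<Longrightarrow> Iv a b (\<Sum>i\<in>A. f i) = (\<Sum>i\<in>A. Iv a b (f i))"
  unfolding Iv_def poly_fun_sum by (rule integral_sum) (auto intro: poly_integrable)
lemma Iv_zero: "Iv a b 0 = 0"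
  unfolding Iv_def poly_fun_zero by simp

lemma solve_lin: "(c::real) \<noteq> 0 \<Longrightarrow> c * X = R \<Longrightarrow> X = R / c"
  by (simp add: field_simps)

lemma Iv_FTC: assumes "a \<le> b" shows "Iv a b (pderiv F) = poly F b - poly F a"
proof -
  have d: "(poly F has_vector_derivative poly (pderiv F) x) (at x within {a..b})" for x
  proof -
    have "(poly F has_real_derivative poly (pderiv F) x) (at x within {a..b})"
      by (rule has_field_derivative_at_within) (rule poly_DERIV)
    then show ?thesis unfolding has_real_derivative_iff_has_vector_derivative .
  qed
  have "((poly (pderiv F)) has_integral (poly F b - poly F a)) {a..b}"
    by (rule fundamental_theorem_of_calculus[OF assms d])
  then show ?thesis unfolding Iv_def by (rule integral_unique)
qed

lemma Iv_parts: assumes "a \<le> b"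
  shows "Iv a b (pderiv f * g) = poly f b * poly g b - poly f a * poly g a - Iv a b (f * pderiv g)"
proof -
  have "Iv a b (pderiv (f * g)) = poly (f*g) b - poly (f*g) a" by (rule Iv_FTC[OF assms])
  moreover have "pderiv (f * g) = f * pderiv g + pderiv f * g" by (simp add: pderiv_mult algebra_simps)
  ultimately show ?thesis by (simp add: Iv_add algebra_simps)
qed

abbreviation "I1 \<equiv> Iv (-1) 1"

lemma Lp_ode_int: "real n * (real n + 1) * I1 (Lp n * Lp m) = - I1 ([:-1,0,1:] * pderiv (Lp n) * pderiv (Lp m))"
proof -
  have "real n * (real n + 1) * I1 (Lp n * Lp m) = I1 (smult (real n * (real n + 1)) (Lp n) * Lp m)"
    by (simp add: Iv_smult)
  also have "\<dots> = I1 (pderiv ([:-1,0,1:] * pderiv (Lp n)) * Lp m)" by (simp only: ODE)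
  also have "\<dots> = - I1 ([:-1,0,1:] * pderiv (Lp n) * pderiv (Lp m))"
    by (subst Iv_parts) (simp_all add: mult.assoc)
  finally show ?thesis .
qed

lemma Lp_orth: assumes "n \<noteq> m" shows "I1 (Lp n * Lp m) = 0"
proof -
  have e1: "real n * (real n + 1) * I1 (Lp n * Lp m) = - I1 ([:-1,0,1:] * pderiv (Lp n) * pderiv (Lp m))"
    by (rule Lp_ode_int)
  have e2: "real m * (real m + 1) * I1 (Lp m * Lp n) = - I1 ([:-1,0,1:] * pderiv (Lp m) * pderiv (Lp n))"
    by (rule Lp_ode_int)
  have "Lp m * Lp n = Lp n * Lp m" by (simp add: mult.commute)
  moreover have "[:-1,0,1:] * pderiv (Lp m) * pderiv (Lp n) = [:-1,0,1:] * pderiv (Lp n) * pderiv (Lp m)"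
    by (simp add: algebra_simps)
  ultimately have "(real n * (real n + 1) - real m * (real m + 1)) * I1 (Lp n * Lp m) = 0"
    using e1 e2 by (simp add: algebra_simps)
  moreover have "real n * (real n + 1) \<noteq> real m * (real m + 1)"
  proof
    assume h: "real n * (real n + 1) = real m * (real m + 1)"
    show False
    proof (cases "n < m")
      case True
      then have "real n < real m" by simp
      then have "real n * (real n + 1) < real m * (real m + 1)"
        by (intro mult_strict_mono) auto
      then show False using h by simp
    next
      case False
      then have "real m < real n" using assms by simp
      then have "real m * (real m + 1) < real n * (real n + 1)"
        by (intro mult_strict_mono) auto
      then show False using h by simp
    qed
  qed
  ultimately show ?thesis by simp
qed

lemma Iv_rec_mult: "(real j + 1) * I1 (Lp (Suc j) * g)
   = (2*real j+1) * I1 ([:0,1:] * Lp j * g) - real j * I1 (Lp (j-1) * g)"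
proof -
  have "(real j + 1) * I1 (Lp (Suc j) * g) = I1 (smult (real j + 1) (Lp (Suc j)) * g)"
    by (simp only: mult_smult_left Iv_smult)
  also have "\<dots> = I1 (smult (2*real j+1) ([:0,1:]*Lp j * g) - smult (real j) (Lp (j-1) * g))"
    unfolding rec_all by (simp only: left_diff_distrib mult_smult_left mult.assoc)
  finally show ?thesis by (simp only: Iv_diff Iv_smult)
qed

lemma Lp_norm: "I1 (Lp n * Lp n) = 2 / (2 * real n + 1)"
proof (induction n)
  case 0
  have "poly (1::real poly) = (\<lambda>x. 1)" by auto
  then show ?case by (simp add: Iv_def)
next
  case (Suc j)
  have e1: "(real j + 1) * I1 (Lp (Suc j) * Lp (Suc j))
     = (2*real j+1) * I1 ([:0,1:] * Lp j * Lp (Suc j))"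
    using Iv_rec_mult[of j "Lp (Suc j)"] Lp_orth[of "j-1" "Suc j"] by simp
  have e2: "(real (Suc j) + 1) * I1 (Lp (Suc (Suc j)) * Lp j)
     = (2*real (Suc j)+1) * I1 ([:0,1:] * Lp (Suc j) * Lp j) - real (Suc j) * I1 (Lp j * Lp j)"
    using Iv_rec_mult[of "Suc j" "Lp j"] by simp
  have "I1 (Lp (Suc (Suc j)) * Lp j) = 0" by (rule Lp_orth) simp
  moreover have "[:0,1:] * Lp (Suc j) * Lp j = [:0,1:] * Lp j * Lp (Suc j)" by (simp add: algebra_simps)
  ultimately have "(2*real j+3) * I1 ([:0,1:] * Lp j * Lp (Suc j)) = (real j + 1) * (2 / (2 * real j + 1))"
    using e2 Suc by (simp add: algebra_simps)
  then have x: "I1 ([:0,1:] * Lp j * Lp (Suc j)) = (real j + 1) * (2 / (2 * real j + 1)) / (2*real j+3)"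
    by (rule solve_lin[rotated]) simp
  have "(real j + 1) * I1 (Lp (Suc j) * Lp (Suc j)) = (real j + 1) * (2 / (2 * real (Suc j) + 1))"
  proof -
    have nz: "2 * real j + 1 \<noteq> 0" "2 * real j + 3 \<noteq> 0" "3 + 2 * real j \<noteq> 0" by linarith+
    have h: "(2*real j+1) * (2 / (2 * real j + 1)) = 2" unfolding times_divide_eq_right by (rule nonzero_mult_div_cancel_left[OF nz(1)])
    have "(2*real j+1) * ((real j + 1) * (2 / (2 * real j + 1)) / (2*real j+3))
        = (real j + 1) * ((2*real j+1) * (2 / (2 * real j + 1))) / (2*real j+3)" by (metis mult.left_commute times_divide_eq_right)
    also have "\<dots> = (real j + 1) * (2 / (2 * real (Suc j) + 1))" unfolding h by (simp add: add.commute)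
    finally show ?thesis unfolding e1 x .
  qed
  then show ?case by (rule mult_left_cancel[THEN iffD1, rotated]) simp
qed

definition Tp :: "real \<Rightarrow> real \<Rightarrow> real poly" where "Tp a b = [:-(a+b)/(b-a), 2/(b-a):]"
definition S :: "real \<Rightarrow> real \<Rightarrow> nat \<Rightarrow> real poly" where "S a b n = pcompose (Lp n) (Tp a b)"

lemma poly_Tp: assumes "a \<noteq> b" shows "poly (Tp a b) y = (2*y-a-b)/(b-a)"
proof -
  have h: "b - a \<noteq> 0" using assms by simp
  have "poly (Tp a b) y = -(a+b)/(b-a) + y*(2/(b-a))" by (simp add: Tp_def)
  also have "\<dots> = (2*y-a-b)/(b-a)" using h by (simp add: add_divide_distrib diff_divide_distrib)
  finally show ?thesis .
qed

lemma half_two: "(x::real)/2 * (2/c) = x/c"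
  by (cases "c=0") (simp_all add: field_simps)

lemma shifted_S: assumes "a \<noteq> b" shows "shifted_legendre a b n = poly (S a b n)"
  by (rule ext) (simp only: shifted_legendre_def S_def poly_pcompose poly_Lp poly_Tp[OF assms])

lemma deg_Tp: "a \<noteq> b \<Longrightarrow> degree (Tp a b) = 1"
  by (simp add: Tp_def)

lemma deg_S: "a \<noteq> b \<Longrightarrow> degree (S a b n) = n"
  by (simp add: S_def degree_pcompose deg_Tp Lp_deg)

lemma S_b: "a \<noteq> b \<Longrightarrow> poly (S a b n) b = 1"
proof -
  assume "a \<noteq> b"
  then have "poly (Tp a b) b = 1" by (simp add: poly_Tp field_simps)
  then show ?thesis by (simp add: S_def poly_pcompose Lp_one)
qed

lemma S_nz: assumes "a \<noteq> b" shows "S a b n \<noteq> 0"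
proof
  assume "S a b n = 0"
  then have "poly (S a b n) b = 0" by simp
  then show False using S_b[OF assms, of n] by simp
qed

lemma pderiv_sum': "pderiv (\<Sum>i\<in>A. f i) = (\<Sum>i\<in>A. pderiv (f i))"
  by (induction A rule: infinite_finite_induct) (simp_all add: pderiv_add)

lemma antideriv: "\<exists>R. pderiv R = (r::real poly)"
proof
  have "pderiv (\<Sum>i\<le>degree r. monom (coeff r i / (real i + 1)) (Suc i))
     = (\<Sum>i\<le>degree r. pderiv (monom (coeff r i / (real i + 1)) (Suc i)))"
    by (rule pderiv_sum')
  also have "\<dots> = (\<Sum>i\<le>degree r. monom (coeff r i) i)"
  proof (rule sum.cong[OF refl])
    fix i
    have "of_nat (Suc i) * (coeff r i / (real i + 1)) = coeff r i" by (simp add: field_simps)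
    then show "pderiv (monom (coeff r i / (real i + 1)) (Suc i)) = monom (coeff r i) i"
      by (simp only: pderiv_monom diff_Suc_1)
  qed
  also have "\<dots> = r" by (rule poly_as_sum_of_monoms)
  finally show "pderiv (\<Sum>i\<le>degree r. monom (coeff r i / (real i + 1)) (Suc i)) = r" .
qed

lemma Iv_transport: assumes ab: "a < b"
  shows "Iv a b (pcompose r (Tp a b)) = (b-a)/2 * I1 r"
proof -
  obtain R where R: "pderiv R = r" using antideriv by blast
  have pT: "pderiv (Tp a b) = [:2/(b-a):]" by (simp add: Tp_def pderiv_pCons)
  have "pderiv (pcompose R (Tp a b)) = smult (2/(b-a)) (pcompose r (Tp a b))"
    by (simp add: pderiv_pcompose R pT)
  moreover have one: "(b-a)/2 * (2/(b-a)) = 1" using ab by simp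
  ultimately have e: "pcompose r (Tp a b) = smult ((b-a)/2) (pderiv (pcompose R (Tp a b)))"
    by (simp only: smult_smult one smult_1_left)
  have Ta: "poly (Tp a b) a = -1" and Tb: "poly (Tp a b) b = 1" using ab by (simp_all add: poly_Tp field_simps)
  have "Iv a b (pcompose r (Tp a b)) = (b-a)/2 * (poly R 1 - poly R (-1))"
    unfolding e Iv_smult using ab by (simp add: Iv_FTC poly_pcompose Ta Tb)
  also have "\<dots> = (b-a)/2 * I1 r" using Iv_FTC[of "-1" 1 R] R by simp
  finally show ?thesis .
qed

lemma S_prod: "S a b n * S a b m = pcompose (Lp n * Lp m) (Tp a b)"
  by (simp add: S_def pcompose_mult)

lemma S_orth: "a < b \<Longrightarrow> n \<noteq> m \<Longrightarrow> Iv a b (S a b n * S a b m) = 0"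
  by (simp add: S_prod Iv_transport Lp_orth)

lemma S_norm: "a < b \<Longrightarrow> Iv a b (S a b n * S a b n) = (b-a)/(2*real n + 1)"
  by (simp only: S_prod Iv_transport Lp_norm half_two)

lemma deg_le_drop: "degree (p::real poly) \<le> d \<Longrightarrow> coeff p d = 0 \<Longrightarrow> p = 0 \<or> degree p < d"
  by (metis le_neq_implies_less leading_coeff_0_iff)

lemma span:
  fixes F :: "nat \<Rightarrow> real poly"
  assumes F: "\<And>j. degree (F j) = j" "\<And>j. F j \<noteq> 0"
  shows "q = 0 \<or> degree q < d \<Longrightarrow> \<exists>c. q = (\<Sum>j<d. smult (c j) (F j))"
proof (induction d arbitrary: q)
  case 0 then show ?case by auto
next
  case (Suc d)
  define \<alpha> where "\<alpha> = coeff q d / coeff (F d) d"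
  have lc: "coeff (F d) d \<noteq> 0" using F[of d] by (metis leading_coeff_0_iff)
  define q' where "q' = q - smult \<alpha> (F d)"
  have c0: "coeff q' d = 0" using lc by (simp add: q'_def \<alpha>_def)
  have dq: "degree q \<le> d" using Suc.prems by auto
  have dF: "degree (smult \<alpha> (F d)) \<le> d" using degree_smult_le[of \<alpha> "F d"] F(1)[of d] by simp
  have "degree q' \<le> d"
    unfolding q'_def using dq dF by (rule degree_diff_le)
  then have "q' = 0 \<or> degree q' < d" using c0 by (rule deg_le_drop)
  then obtain c where c: "q' = (\<Sum>j<d. smult (c j) (F j))" using Suc.IH by blast
  have sc: "(\<Sum>j<d. smult ((c(d:=\<alpha>)) j) (F j)) = (\<Sum>j<d. smult (c j) (F j))"
    by (rule sum.cong) auto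
  have "q = q' + smult \<alpha> (F d)" by (simp add: q'_def)
  also have "\<dots> = (\<Sum>j<d. smult ((c(d:=\<alpha>)) j) (F j)) + smult ((c(d:=\<alpha>)) d) (F d)"
    unfolding sc c by simp
  also have "\<dots> = (\<Sum>j<Suc d. smult ((c(d:=\<alpha>)) j) (F j))" by simp
  finally show ?case by blast
qed

lemma orth_low: assumes ab: "a < b" and dq: "degree q < n"
  shows "Iv a b (S a b n * q) = 0"
proof -
  have "\<exists>c. q = (\<Sum>j<n. smult (c j) (S a b j))"
    using dq ab by (intro span) (auto simp: deg_S S_nz)
  then obtain c where c: "q = (\<Sum>j<n. smult (c j) (S a b j))" by blast
  have "Iv a b (S a b n * q) = (\<Sum>j<n. c j * Iv a b (S a b n * S a b j))"
    unfolding c by (simp add: sum_distrib_left Iv_sum Iv_smult mult_smult_right)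
  also have "\<dots> = 0"
  proof (rule sum.neutral, rule ballI)
    fix j assume "j \<in> {..<n}"
    then have "n \<noteq> j" by simp
    then show "c j * Iv a b (S a b n * S a b j) = 0" using S_orth[OF ab] by simp
  qed
  finally show ?thesis .
qed

definition al :: "nat \<Rightarrow> real \<Rightarrow> real" where "al k c = c / (real k * (1 - c))"

definition pp :: "real \<Rightarrow> real \<Rightarrow> nat \<Rightarrow> real \<Rightarrow> real poly" where
  "pp a b k c = S a b k + smult (al k c) ([:-a,1:] * pderiv (S a b k))"

lemma al_prop: "real k \<noteq> 0 \<Longrightarrow> c \<noteq> 1 \<Longrightarrow> (1-c) * al k c * real k = c"
  by (simp add: al_def field_simps)

lemma p_poly_pp: assumes "a < b" shows "p_poly a b k c = poly (pp a b k c)"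
proof (rule ext)
  fix y
  have ne: "a \<noteq> b" using assms by simp
  have d: "deriv (poly (S a b k)) y = poly (pderiv (S a b k)) y"
    by (rule DERIV_imp_deriv) (rule poly_DERIV)
  show "p_poly a b k c y = poly (pp a b k c) y"
    unfolding p_poly_def shifted_S[OF ne] d pp_def al_def[symmetric] by (simp add: algebra_simps)
qed

lemma key_alg:
  fixes g t c K P0 P1 P2 D1 yb ya dS \<alpha> :: real
  assumes al: "(1-c) * \<alpha> * K = c"
    and yb: "yb = g*(t-1)" and ya: "ya = g*(t+1)" and dS: "g * dS = D1"
    and rec: "(K+1)*P2 = (2*K+1)*t*P1 - K*P0"
    and A: "(t*t-1)*D1 = K*(t*P1 - P0)"
  shows "(2*K+1)*(1-c) * (yb * (P1 + \<alpha> * ya * dS))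
       = g * ((K+1)*P2 - (2*K+1)*(1-c)*P1 + (K - (2*K+1)*c)*P0)"
proof -
  have "yb * ya * dS = g * ((t*t-1) * (g * dS))" unfolding yb ya by (simp add: algebra_simps)
  also have "\<dots> = g * (K*(t*P1 - P0))" unfolding dS A ..
  finally have e1: "yb * ya * dS = g * (K*(t*P1 - P0))" .
  have r': "(2*K+1)*t*P1 = (K+1)*P2 + K*P0" using rec by simp
  have "(2*K+1)*(1-c) * (yb * (P1 + \<alpha> * ya * dS))
      = (2*K+1)*(1-c)*yb*P1 + (2*K+1)*((1-c)*\<alpha>) * (yb*ya*dS)"
    by (simp add: algebra_simps)
  also have "\<dots> = (2*K+1)*(1-c)*(g*(t-1))*P1 + (2*K+1)*((1-c)*\<alpha>*K) * (g*(t*P1 - P0))"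
    unfolding e1 by (simp add: yb algebra_simps)
  also have "\<dots> = (2*K+1)*(1-c)*(g*(t-1))*P1 + (2*K+1)*c * (g*(t*P1 - P0))"
    unfolding al ..
  also have "\<dots> = g * ((2*K+1)*t*P1 - (2*K+1)*(1-c)*P1 - (2*K+1)*c*P0)"
    by (simp add: algebra_simps)
  also have "\<dots> = g * ((K+1)*P2 + K*P0 - (2*K+1)*(1-c)*P1 - (2*K+1)*c*P0)"
    unfolding r' ..
  also have "\<dots> = g * ((K+1)*P2 - (2*K+1)*(1-c)*P1 + (K - (2*K+1)*c)*P0)"
    by (simp add: algebra_simps)
  finally show ?thesis .
qed

definition Wc :: "real \<Rightarrow> real \<Rightarrow> nat \<Rightarrow> real \<Rightarrow> real poly" where
  "Wc a b k c = smult (real k + 1) (S a b (Suc k))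
     + (smult (real k - (2*real k+1)*c) (S a b (k-1)) - smult ((2*real k+1)*(1-c)) (S a b k))"

lemma pp_identity: assumes ab: "a<b" and k: "k \<ge> 1" and c: "c \<noteq> 1"
  shows "smult ((2*real k+1)*(1-c)) ([:-b,1:] * pp a b k c) = smult ((b-a)/2) (Wc a b k c)"
proof (rule poly_eq_poly_eq_iff[THEN iffD1], rule ext)
  fix y
  define t where "t = poly (Tp a b) y"
  define g where "g = (b-a)/2"
  obtain m where m: "k = Suc m" using k by (cases k) auto
  have hS: "poly (S a b j) y = P j t" for j by (simp add: S_def poly_pcompose t_def)
  have pT: "pderiv (Tp a b) = [:2/(b-a):]" by (simp add: Tp_def pderiv_pCons)
  define dS where "dS = poly (pderiv (S a b k)) y"
  have hD: "dS = D k t * (2/(b-a))"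
    by (simp add: dS_def S_def pderiv_pcompose pT poly_pcompose t_def)
  have tt: "t = (2*y-a-b)/(b-a)" using ab by (simp add: t_def poly_Tp)
  have ba: "b - a \<noteq> 0" using ab by simp
  have gdS: "g * dS = D k t" unfolding g_def hD using ba by simp
  have yb: "y - b = g*(t-1)" using ba unfolding tt g_def by (simp add: field_simps)
  have ya: "y - a = g*(t+1)" using ba unfolding tt g_def by (simp add: field_simps)
  have rec: "(real k+1)*P (Suc k) t = (2*real k+1)*t*P k t - real k*P (k-1) t"
    using arg_cong[OF rec_all[of k], of "\<lambda>p. poly p t"] by (simp add: algebra_simps)
  have A: "(t*t-1)*D k t = real k*(t*P k t - P (k-1) t)"
    using A_id[of t m] unfolding m by simp
  have K: "real k \<noteq> 0" using k by simp
  have key: "(2*real k+1)*(1-c) * ((y-b) * (P k t + al k c * (y-a) * dS))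
     = g * ((real k+1)*P (Suc k) t - (2*real k+1)*(1-c)*P k t + (real k - (2*real k+1)*c)*P (k-1) t)"
    by (rule key_alg[OF al_prop[OF K c] yb ya gdS rec A])
  have L: "poly (smult ((2*real k+1)*(1-c)) ([:-b,1:] * pp a b k c)) y
     = (2*real k+1)*(1-c) * ((y-b) * (P k t + al k c * (y-a) * dS))"
    by (simp add: pp_def hS dS_def algebra_simps)
  have R: "poly (smult g (Wc a b k c)) y
     = g * ((real k+1)*P (Suc k) t - (2*real k+1)*(1-c)*P k t + (real k - (2*real k+1)*c)*P (k-1) t)"
    by (simp add: Wc_def hS algebra_simps)
  show "poly (smult ((2*real k+1)*(1-c)) ([:-b,1:] * pp a b k c)) y = poly (smult ((b-a)/2) (Wc a b k c)) y"
    unfolding g_def[symmetric] L R key ..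
qed

lemma Wc_b: "a < b \<Longrightarrow> poly (Wc a b k c) b = 0"
  by (simp add: Wc_def S_b algebra_simps)

lemma deg_Wc: assumes ab: "a < b" shows "degree (Wc a b k c) = Suc k"
proof -
  have ne: "a \<noteq> b" using ab by simp
  have d1: "degree (smult (real k + 1) (S a b (Suc k))) = Suc k"
    by (simp add: deg_S[OF ne])
  have d2: "degree (smult (real k - (2*real k+1)*c) (S a b (k-1)) - smult ((2*real k+1)*(1-c)) (S a b k)) \<le> k"
    by (intro degree_diff_le order.trans[OF degree_smult_le]) (simp_all add: deg_S[OF ne])
  show ?thesis unfolding Wc_def
    by (subst degree_add_eq_left) (use d1 d2 in simp_all)
qed

lemma quad_cong: assumes "A 0 = 0" "\<And>j. 1 \<le> j \<Longrightarrow> j \<le> k+1 \<Longrightarrow> f (xs j) = g (xs j)"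
  shows "quad k xs A f = quad k xs A g"
  unfolding quad_def
proof (rule sum.cong[OF refl])
  fix j assume "j \<in> {0..k+1}"
  then show "A j * f (xs j) = A j * g (xs j)" using assms by (cases "j = 0") auto
qed

lemma quad_zero: "quad k xs A (\<lambda>y. 0) = 0"
  by (simp add: quad_def)

lemma cond2:
  assumes ab: "a < b" and k: "k \<ge> 1" and A0: "A 0 = 0"
    and ex: "\<forall>p::real poly. degree p \<le> 2*k-1 \<longrightarrow> integral {a..b} (poly p) = quad k xs A (poly p)"
    and rel: "\<And>j. 1 \<le> j \<Longrightarrow> j \<le> k+1 \<Longrightarrow> (real k + 1) * poly (S a b (Suc k)) (xs j)
                 = \<beta> * poly (S a b k) (xs j) + \<gamma> * poly (S a b (k-1)) (xs j)"
  shows "quad k xs A (\<lambda>y. shifted_legendre a b (k + 1) y * shifted_legendre a b (k - 1) y)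
         = \<gamma>/(real k+1) * ((b-a)/(2*real k - 1))"
proof -
  have ne: "a \<noteq> b" using ab by simp
  have k1: "real k + 1 \<noteq> 0" by (simp add: add.commute)
  define G where "G = smult (1/(real k+1)) ((smult \<beta> (S a b k) + smult \<gamma> (S a b (k-1))) * S a b (k-1))"
  have step1: "quad k xs A (\<lambda>y. shifted_legendre a b (k + 1) y * shifted_legendre a b (k - 1) y)
      = quad k xs A (poly G)"
  proof (rule quad_cong, rule A0)
    fix j assume j: "1 \<le> j" "j \<le> k+1"
    define u where "u = poly (S a b (Suc k)) (xs j)"
    define v where "v = poly (S a b k) (xs j)"
    define w where "w = poly (S a b (k-1)) (xs j)"
    have r: "(real k + 1) * u = \<beta> * v + \<gamma> * w" using rel[OF j] unfolding u_def v_def w_def .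
    have u: "u = (\<beta> * v + \<gamma> * w) / (real k + 1)" using r k1 by (simp add: eq_divide_eq mult.commute)
    have "shifted_legendre a b (k + 1) (xs j) * shifted_legendre a b (k - 1) (xs j) = u * w"
      unfolding u_def w_def shifted_S[OF ne] by simp
    also have "\<dots> = poly G (xs j)" unfolding G_def u by (simp add: v_def w_def)
    finally show "shifted_legendre a b (k + 1) (xs j) * shifted_legendre a b (k - 1) (xs j) = poly G (xs j)" .
  qed
  have d1: "degree (smult \<beta> (S a b k) + smult \<gamma> (S a b (k-1))) \<le> k"
    by (intro degree_add_le order.trans[OF degree_smult_le]) (simp_all add: deg_S[OF ne])
  have "degree ((smult \<beta> (S a b k) + smult \<gamma> (S a b (k-1))) * S a b (k-1)) \<le> k + (k-1)"
    by (rule order.trans[OF degree_mult_le add_mono[OF d1]]) (simp add: deg_S[OF ne])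
  then have degG: "degree G \<le> 2*k-1" unfolding G_def using k
    by (intro order.trans[OF degree_smult_le]) simp
  have step2: "quad k xs A (poly G) = Iv a b G" using ex degG unfolding Iv_def by simp
  have "Iv a b G = 1/(real k+1) * (\<beta> * Iv a b (S a b k * S a b (k-1)) + \<gamma> * Iv a b (S a b (k-1) * S a b (k-1)))"
    unfolding G_def by (simp add: Iv_smult Iv_add distrib_right mult_smult_left)
  also have "\<dots> = 1/(real k+1) * (\<gamma> * ((b-a)/(2*real (k-1)+1)))"
    using k by (simp add: S_orth[OF ab] S_norm[OF ab])
  also have "2*real (k-1)+1 = 2*real k - 1" using k by (simp add: of_nat_diff)
  finally have step3: "Iv a b G = 1/(real k+1) * (\<gamma> * ((b-a)/(2*real k - 1)))" .
  show ?thesis unfolding step1 step2 step3 by simp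
qed

definition lag :: "(nat \<Rightarrow> real) \<Rightarrow> nat set \<Rightarrow> nat \<Rightarrow> real poly" where
  "lag xs J j = smult (1 / (\<Prod>m\<in>J-{j}. (xs j - xs m))) (\<Prod>m\<in>J-{j}. [:-xs m, 1:])"

lemma poly_lin: "poly [:-z,1:] y = y - (z::real)" by simp

lemma poly_lag: "poly (lag xs J j) y = 1 / (\<Prod>m\<in>J-{j}. (xs j - xs m)) * (\<Prod>m\<in>J-{j}. (y - xs m))"
  by (simp only: lag_def poly_smult poly_prod poly_lin)

lemma lag_node: assumes fin: "finite J" and inj: "inj_on xs J" and i: "i \<in> J" and j: "j \<in> J"
  shows "poly (lag xs J j) (xs i) = (if i = j then 1 else 0)"
proof (cases "i = j")
  case True
  have nz: "(\<Prod>m\<in>J-{j}. (xs j - xs m)) \<noteq> 0"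
  proof -
    have "xs j - xs m \<noteq> 0" if "m \<in> J-{j}" for m using inj j that by (auto simp: inj_on_def)
    then show ?thesis using fin by (simp add: prod_zero_iff)
  qed
  show ?thesis using True nz by (simp add: poly_lag)
next
  case False
  have "(\<Prod>m\<in>J-{j}. (xs i - xs m)) = 0" using fin i False by (intro prod_zero) auto
  then show ?thesis using False by (simp add: poly_lag)
qed

lemma deg_lag: assumes "finite J" shows "degree (lag xs J j) \<le> card (J - {j})"
proof -
  have "degree (\<Prod>m\<in>J-{j}. [:-xs m, 1:]) \<le> (\<Sum>m\<in>J-{j}. degree [:-xs m, 1:])"
    using degree_prod_sum_le[of "J-{j}" "\<lambda>m. [:-xs m, 1:]"] assms by (simp add: o_def)
  also have "\<dots> = card (J - {j})" by simp
  finally show ?thesis unfolding lag_def by (rule order.trans[OF degree_smult_le])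
qed

lemma interp: assumes fin: "finite J" and inj: "inj_on xs J" and deg: "degree r < card J"
  shows "r = (\<Sum>j\<in>J. smult (poly r (xs j)) (lag xs J j))"
proof (rule poly_eqI_degree[where A = "xs ` J"])
  fix x assume "x \<in> xs ` J"
  then obtain i where i: "i \<in> J" "x = xs i" by auto
  have "poly (\<Sum>j\<in>J. smult (poly r (xs j)) (lag xs J j)) x = (\<Sum>j\<in>J. poly r (xs j) * poly (lag xs J j) (xs i))"
    unfolding poly_sum poly_smult i(2) ..
  also have "\<dots> = (\<Sum>j\<in>J. if j = i then poly r (xs i) else 0)"
    by (rule sum.cong[OF refl]) (use lag_node[OF fin inj i(1)] in auto)
  also have "\<dots> = poly r (xs i)" using fin i(1) by simp
  finally show "poly r x = poly (\<Sum>j\<in>J. smult (poly r (xs j)) (lag xs J j)) x" using i by simp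
next
  show "degree r < card (xs ` J)" using deg card_image[OF inj] by simp
next
  have cJ: "card J > 0" using deg by simp
  have "degree (\<Sum>j\<in>J. smult (poly r (xs j)) (lag xs J j)) \<le> card J - 1"
  proof (rule degree_sum_le[OF fin])
    fix j assume "j \<in> J"
    then have "card (J - {j}) = card J - 1" using fin by simp
    then show "degree (smult (poly r (xs j)) (lag xs J j)) \<le> card J - 1"
      using deg_lag[OF fin, of xs j] by (intro order.trans[OF degree_smult_le]) simp
  qed
  then show "degree (\<Sum>j\<in>J. smult (poly r (xs j)) (lag xs J j)) < card (xs ` J)"
    using cJ card_image[OF inj] by simp
qed

lemma mono_nodes: assumes m: "\<forall>j\<le>k. xs j < xs (Suc j)"
  shows "i < j \<Longrightarrow> j \<le> k+1 \<Longrightarrow> (xs i :: real) < xs j"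
proof (induction j)
  case 0 then show ?case by simp
next
  case (Suc j)
  have s: "xs j < xs (Suc j)" using m Suc.prems by auto
  show ?case
  proof (cases "i = j")
    case True with s show ?thesis by simp
  next
    case False
    with Suc.prems have "i < j" "j \<le> k+1" by auto
    with Suc.IH have "xs i < xs j" by simp
    with s show ?thesis by simp
  qed
qed

lemma inj_nodes: assumes m: "\<forall>j\<le>k. xs j < xs (Suc j)"
  shows "inj_on (xs :: nat \<Rightarrow> real) {1..k+1}"
proof (rule inj_onI)
  fix i j assume i: "i \<in> {1..k+1}" and j: "j \<in> {1..k+1}" and e: "xs i = xs j"
  show "i = j"
  proof (rule ccontr)
    assume "i \<noteq> j"
    then have "i < j \<or> j < i" by auto
    then show False using mono_nodes[OF m, of i j] mono_nodes[OF m, of j i] i j e by auto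
  qed
qed

lemma coeff_extract: assumes ab: "a < b"
  shows "Iv a b ((\<Sum>j<d. smult (cc j) (S a b j)) * S a b i) = (if i < d then cc i * ((b-a)/(2*real i+1)) else 0)"
proof -
  have "Iv a b ((\<Sum>j<d. smult (cc j) (S a b j)) * S a b i) = (\<Sum>j<d. cc j * Iv a b (S a b j * S a b i))"
    by (simp add: sum_distrib_right Iv_sum Iv_smult mult_smult_left)
  also have "\<dots> = (\<Sum>j<d. if j = i then cc i * ((b-a)/(2*real i+1)) else 0)"
    by (rule sum.cong[OF refl]) (auto simp: S_orth[OF ab] S_norm[OF ab])
  also have "\<dots> = (if i < d then cc i * ((b-a)/(2*real i+1)) else 0)" by simp
  finally show ?thesis .
qed

lemma zero_set_q:
  fixes xs :: "nat \<Rightarrow> real"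
  shows "{y. poly (\<Prod>j\<in>{1..k}. [:-xs j, 1:]) y = 0} = {xs j | j. 1 \<le> j \<and> j \<le> k}"
  by (auto simp: poly_prod prod_zero_iff)

lemma prod_split_last: "(\<Prod>j\<in>{1..(k::nat)+1}. [:-xs j, 1:]) = [:-xs (k+1), 1:] * (\<Prod>j\<in>{1..k}. [:-(xs j::real), 1:])"
proof -
  have "{1..k+1} = insert (k+1) {1..k}" by auto
  then show ?thesis by simp
qed

lemma cell_fwd:
  assumes ab: "a < b" and k: "k \<ge> 1" and xk: "xs (k+1) = b"
    and adm: "admissible_rule a b xs k A" and A0: "A 0 = 0"
  shows "\<exists>c::real. c < 1 \<and> {xs j | j. 1 \<le> j \<and> j \<le> k} = {y. p_poly a b k c y = 0}"
proof -
  have ne: "a \<noteq> b" using ab by simp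
  have ex: "\<forall>p::real poly. degree p \<le> 2*k-1 \<longrightarrow> integral {a..b} (poly p) = quad k xs A (poly p)"
   and cnd: "(b - a) / (2 * real k - 1) - quad k xs A (\<lambda>y. shifted_legendre a b (k + 1) y * shifted_legendre a b (k - 1) y) > 0"
    using adm unfolding admissible_rule_def by auto
  define J where "J = {1..k+1}"
  define \<omega> where "\<omega> = (\<Prod>j\<in>J. [:-xs j, 1:])"
  have \<omega>n: "poly \<omega> (xs j) = 0" if "j \<in> J" for j
    unfolding \<omega>_def poly_prod using that by (intro prod_zero) (auto simp: J_def)
  have deg\<omega>: "degree \<omega> = k+1"
    unfolding \<omega>_def by (subst degree_prod_eq_sum_degree) (auto simp: J_def)
  have s1: "Iv a b (\<omega> * r) = 0" if "degree r + 2 \<le> k" for r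
  proof -
    have "degree (\<omega> * r) \<le> degree \<omega> + degree r" by (rule degree_mult_le)
    then have "degree (\<omega> * r) \<le> 2*k-1" using deg\<omega> that by simp
    then have "Iv a b (\<omega>*r) = quad k xs A (poly (\<omega>*r))" using ex unfolding Iv_def by simp
    also have "\<dots> = quad k xs A (\<lambda>y. 0)" by (rule quad_cong, rule A0) (simp add: \<omega>n J_def)
    also have "\<dots> = 0" by (rule quad_zero)
    finally show ?thesis .
  qed
  have "\<exists>cc. \<omega> = (\<Sum>j<k+2. smult (cc j) (S a b j))"
    by (rule span[OF deg_S[OF ne] S_nz[OF ne]]) (simp add: deg\<omega>)
  then obtain cc where cc: "\<omega> = (\<Sum>j<k+2. smult (cc j) (S a b j))" by blast
  have z: "cc i = 0" if hi: "i + 2 \<le> k" for i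
  proof -
    have "degree (S a b i) + 2 \<le> k" using hi by (simp add: deg_S[OF ne])
    then have "Iv a b (\<omega> * S a b i) = 0" by (rule s1)
    moreover have "Iv a b (\<omega> * S a b i) = cc i * ((b-a)/(2*real i+1))"
      unfolding cc using coeff_extract[OF ab, where d="k+2" and cc=cc and i=i] hi by simp
    moreover have "(b-a)/(2*real i+1) \<noteq> 0" using ab by (simp add: add_pos_pos)
    ultimately show ?thesis by simp
  qed
  define C1 where "C1 = cc (k+1)"
  define C0 where "C0 = cc k"
  define Cm where "Cm = cc (k-1)"
  obtain m' where m': "k = Suc m'" using k by (cases k) auto
  have \<omega>e: "\<omega> = smult C1 (S a b (Suc k)) + smult C0 (S a b k) + smult Cm (S a b (k-1))"
  proof -
    have kk: "k+2 = Suc (Suc (Suc m'))" using m' by simp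
    have "\<omega> = (\<Sum>j<m'. smult (cc j) (S a b j)) + smult (cc m') (S a b m') + smult (cc (Suc m')) (S a b (Suc m'))
             + smult (cc (Suc (Suc m'))) (S a b (Suc (Suc m')))"
      unfolding cc kk by (simp only: sum.lessThan_Suc)
    moreover have "(\<Sum>j<m'. smult (cc j) (S a b j)) = 0"
      by (rule sum.neutral) (use z m' in auto)
    ultimately show ?thesis unfolding C1_def C0_def Cm_def m' by (simp add: algebra_simps)
  qed
  have C1: "C1 \<noteq> 0"
  proof
    assume "C1 = 0"
    then have "\<omega> = smult C0 (S a b k) + smult Cm (S a b (k-1))" using \<omega>e by simp
    moreover have "degree (smult C0 (S a b k) + smult Cm (S a b (k-1))) \<le> k"
      by (intro degree_add_le order.trans[OF degree_smult_le]) (simp_all add: deg_S[OF ne])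
    ultimately show False using deg\<omega> by simp
  qed
  have sumC: "C1 + C0 + Cm = 0"
  proof -
    have "poly \<omega> b = 0" using \<omega>n[of "k+1"] xk by (simp add: J_def)
    then show ?thesis unfolding \<omega>e by (simp add: S_b[OF ne])
  qed
  define \<nu> where "\<nu> = Cm / C1"
  have rel: "(real k + 1) * poly (S a b (Suc k)) (xs j)
       = (-(real k+1)*C0/C1) * poly (S a b k) (xs j) + (-(real k+1)*Cm/C1) * poly (S a b (k-1)) (xs j)"
    if j: "1 \<le> j" "j \<le> k+1" for j
  proof -
    define U where "U = poly (S a b (Suc k)) (xs j)"
    define V where "V = poly (S a b k) (xs j)"
    define W where "W = poly (S a b (k-1)) (xs j)"
    have h0: "C1*U + C0*V + Cm*W = 0" using \<omega>n[of j] j unfolding \<omega>e U_def V_def W_def J_def by simp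
    have h1: "-(C0*V + Cm*W) = C1*U" using h0 by (simp add: algebra_simps)
    have "(-(real k+1)*C0/C1) * V + (-(real k+1)*Cm/C1) * W = (real k+1) * (-(C0*V + Cm*W)) / C1"
      using C1 by (simp add: field_simps)
    also have "\<dots> = (real k+1)*(C1*U)/C1" unfolding h1 ..
    also have "\<dots> = (real k + 1) * U" using C1 by simp
    finally have "(real k + 1) * U = (-(real k+1)*C0/C1) * V + (-(real k+1)*Cm/C1) * W" by simp
    then show ?thesis unfolding U_def V_def W_def .
  qed
  have q: "quad k xs A (\<lambda>y. shifted_legendre a b (k + 1) y * shifted_legendre a b (k - 1) y)
      = (-(real k+1)*Cm/C1)/(real k+1) * ((b-a)/(2*real k - 1))"
    by (rule cond2[OF ab k A0 ex rel])
  have q2: "(-(real k+1)*Cm/C1)/(real k+1) = - \<nu>"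
  proof -
    have kk: "real k + 1 \<noteq> 0" by (simp add: add.commute)
    have "(-(real k+1)*Cm/C1)/(real k+1) = (real k+1)*(-Cm/C1)/(real k+1)"
      by (simp only: mult_minus_left mult_minus_right times_divide_eq_right minus_divide_left)
    also have "\<dots> = -Cm/C1" by (rule nonzero_mult_div_cancel_left[OF kk])
    finally show ?thesis unfolding \<nu>_def by simp
  qed
  define N where "N = (b-a)/(2*real k - 1)"
  have Npos: "N > 0" unfolding N_def using ab k by (intro divide_pos_pos) auto
  have "N * (1 + \<nu>) > 0" using cnd unfolding q q2 N_def[symmetric] by (simp add: algebra_simps)
  then have \<nu>1: "1 + \<nu> > 0" using Npos by (simp add: zero_less_mult_iff)
  define c where "c = (real k - (real k+1)*\<nu>)/(2*real k+1)"
  have k21: "2*real k+1 > 0" by simp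
  have c_eq: "(2*real k+1)*c = real k - (real k+1)*\<nu>" unfolding c_def using k21 by simp
  have "(real k + 1) * (1 + \<nu>) > 0" using \<nu>1 by simp
  then have "(2*real k+1)*c < (2*real k+1)*1" unfolding c_eq by (simp add: algebra_simps)
  then have c1: "c < 1" using k21 by simp
  have cne: "c \<noteq> 1" using c1 by simp
  have C0e: "C0 = - C1 - Cm" using sumC by simp
  have e1: "real k - (2*real k+1)*c = (real k+1)*\<nu>" using c_eq by simp
  have e2: "(2*real k+1)*(1-c) = (real k+1)*(1+\<nu>)" using c_eq by (simp add: algebra_simps)
  have Wce: "Wc a b k c = smult ((real k+1)/C1) \<omega>"
  proof (rule poly_eq_poly_eq_iff[THEN iffD1], rule ext)
    fix y
    define U where "U = poly (S a b (Suc k)) y"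
    define V where "V = poly (S a b k) y"
    define W where "W = poly (S a b (k-1)) y"
    have L: "poly (Wc a b k c) y = (real k + 1)*U + ((real k+1)*\<nu>)*W - ((real k+1)*(1+\<nu>))*V"
      unfolding Wc_def U_def V_def W_def e1[symmetric] e2[symmetric] by simp
    have R: "poly (smult ((real k+1)/C1) \<omega>) y = (real k+1)/C1 * (C1*U + (-C1-Cm)*V + Cm*W)"
      unfolding \<omega>e U_def V_def W_def C0e by simp
    show "poly (Wc a b k c) y = poly (smult ((real k+1)/C1) \<omega>) y"
      unfolding L R \<nu>_def using C1 by (simp add: field_simps)
  qed
  define q where "q = (\<Prod>j\<in>{1..k}. [:-xs j, 1:])"
  have \<omega>q: "\<omega> = [:-b, 1:] * q" unfolding \<omega>_def J_def q_def prod_split_last xk ..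
  define \<kappa> where "\<kappa> = (b-a)/2 * ((real k+1)/C1)"
  have "[:-b,1:] * smult ((2*real k+1)*(1-c)) (pp a b k c) = [:-b,1:] * smult \<kappa> q"
  proof -
    have "[:-b,1:] * smult ((2*real k+1)*(1-c)) (pp a b k c) = smult ((2*real k+1)*(1-c)) ([:-b,1:] * pp a b k c)"
      by simp
    also have "\<dots> = smult ((b-a)/2) (Wc a b k c)" by (rule pp_identity[OF ab k cne])
    also have "\<dots> = [:-b,1:] * smult \<kappa> q" unfolding Wce \<omega>q \<kappa>_def by simp
    finally show ?thesis .
  qed
  then have ppq: "smult ((2*real k+1)*(1-c)) (pp a b k c) = smult \<kappa> q"
    by (subst (asm) mult_cancel_left) simp
  have f1: "(2*real k+1)*(1-c) \<noteq> 0" using c1 k21 by simp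
  have f2: "\<kappa> \<noteq> 0" unfolding \<kappa>_def using ab C1 by (simp add: add.commute)
  have "{y. p_poly a b k c y = 0} = {y. poly q y = 0}"
  proof -
    have "poly (pp a b k c) y = 0 \<longleftrightarrow> poly q y = 0" for y
    proof -
      have "(2*real k+1)*(1-c) * poly (pp a b k c) y = \<kappa> * poly q y"
        using arg_cong[OF ppq, of "\<lambda>p. poly p y"] by simp
      then show ?thesis using f1 f2 by (metis mult_eq_0_iff)
    qed
    then show ?thesis unfolding p_poly_pp[OF ab] by simp
  qed
  also have "\<dots> = {xs j | j. 1 \<le> j \<and> j \<le> k}" unfolding q_def by (rule zero_set_q)
  finally show ?thesis using c1 by auto
qed

lemma cell_bwd:
  assumes ab: "a < b" and k: "k \<ge> 1" and xk: "xs (k+1) = b"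
    and m: "\<forall>j\<le>k. xs j < xs (Suc j)"
    and c1: "c < 1" and zs: "{xs j | j. 1 \<le> j \<and> j \<le> k} = {y. p_poly a b k c y = 0}"
  shows "\<exists>A. admissible_rule a b xs k A \<and> A 0 = 0"
proof -
  have ne: "a \<noteq> b" using ab by simp
  have cne: "c \<noteq> 1" using c1 by simp
  define W where "W = Wc a b k c"
  have k21: "2*real k + 1 > 0" by simp
  have Wn: "poly W (xs j) = 0" if j: "1 \<le> j" "j \<le> k+1" for j
  proof (cases "j = k+1")
    case True then show ?thesis using Wc_b[OF ab] xk by (simp add: W_def)
  next
    case False
    then have "j \<le> k" using j by simp
    then have "xs j \<in> {y. p_poly a b k c y = 0}" using zs j by blast
    then have pz: "poly (pp a b k c) (xs j) = 0" using p_poly_pp[OF ab] by simp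
    show ?thesis
      using arg_cong[OF pp_identity[OF ab k cne], of "\<lambda>p. poly p (xs j)"] pz ab by (simp add: W_def)
  qed
  have degW: "degree W = Suc k" unfolding W_def by (rule deg_Wc[OF ab])
  have W0: "W \<noteq> 0" using degW by auto
  define J where "J = {1..k+1}"
  have inj: "inj_on xs J" unfolding J_def by (rule inj_nodes[OF m])
  have finJ: "finite J" unfolding J_def by simp
  have cardJ: "card J = k+1" unfolding J_def by simp
  define Aw where "Aw j = (if j = 0 then 0 else Iv a b (lag xs J j))" for j
  have Aw0: "Aw 0 = 0" by (simp add: Aw_def)
  have quadr: "quad k xs Aw (poly r) = Iv a b r" if dr: "degree r \<le> k" for r
  proof -
    have "quad k xs Aw (poly r) = Aw 0 * poly r (xs 0) + (\<Sum>j\<in>{Suc 0..k+1}. Aw j * poly r (xs j))"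
      unfolding quad_def by (rule sum.atLeast_Suc_atMost) simp
    also have "(\<Sum>j\<in>{Suc 0..k+1}. Aw j * poly r (xs j)) = (\<Sum>j\<in>J. poly r (xs j) * Iv a b (lag xs J j))"
      by (rule sum.cong) (auto simp: Aw_def J_def)
    finally have e1: "quad k xs Aw (poly r) = (\<Sum>j\<in>J. poly r (xs j) * Iv a b (lag xs J j))" by (simp add: Aw0)
    have "r = (\<Sum>j\<in>J. smult (poly r (xs j)) (lag xs J j))"
      by (rule interp[OF finJ inj]) (use dr cardJ in simp)
    then have "Iv a b r = Iv a b (\<Sum>j\<in>J. smult (poly r (xs j)) (lag xs J j))" by simp
    also have "\<dots> = (\<Sum>j\<in>J. poly r (xs j) * Iv a b (lag xs J j))"
      by (simp add: Iv_sum[OF finJ] Iv_smult)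
    finally show ?thesis using e1 by simp
  qed
  have exq: "\<forall>p::real poly. degree p \<le> 2*k-1 \<longrightarrow> integral {a..b} (poly p) = quad k xs Aw (poly p)"
  proof (intro allI impI)
    fix p :: "real poly" assume dp: "degree p \<le> 2*k-1"
    define s where "s = p div W"
    define r where "r = p mod W"
    have psr: "p = W * s + r" unfolding s_def r_def using div_mult_mod_eq[of p W] by (simp add: mult.commute)
    have dr: "degree r \<le> k" using degree_mod_less[OF W0, of p] degW unfolding r_def by auto
    have Is: "Iv a b (W * s) = 0"
    proof (cases "s = 0")
      case True then show ?thesis by (simp add: Iv_zero)
    next
      case False
      have "degree (W * s) = Suc k + degree s" using degree_mult_eq[OF W0 False] degW by simp
      moreover have "W * s = p - r" using psr by (simp add: algebra_simps)
      moreover have "degree (p - r) \<le> 2*k-1"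
        by (rule degree_diff_le[OF dp]) (use dr k in simp)
      ultimately have ds: "degree s < k - 1" using k by simp
      have ds1: "degree s < Suc k" "degree s < k" "degree s < k - 1" using ds by auto
      have "Iv a b (W * s) = (real k+1) * Iv a b (S a b (Suc k) * s)
           + ((real k - (2*real k+1)*c) * Iv a b (S a b (k-1) * s) - (2*real k+1)*(1-c) * Iv a b (S a b k * s))"
        unfolding W_def Wc_def by (simp add: distrib_right left_diff_distrib mult_smult_left Iv_add Iv_diff Iv_smult)
      also have "\<dots> = 0" using ds1 by (simp add: orth_low[OF ab])
      finally show ?thesis .
    qed
    have "integral {a..b} (poly p) = Iv a b (W * s) + Iv a b r"
      unfolding Iv_def[symmetric] by (subst psr) (simp add: Iv_add)
    also have "\<dots> = Iv a b r" using Is by simp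
    also have "\<dots> = quad k xs Aw (poly r)" using quadr[OF dr] by simp
    also have "\<dots> = quad k xs Aw (poly p)"
    proof (rule quad_cong, rule Aw0)
      fix j assume "1 \<le> j" "j \<le> k+1"
      then have "poly W (xs j) = 0" by (rule Wn)
      then show "poly r (xs j) = poly p (xs j)" by (subst psr) simp
    qed
    finally show "integral {a..b} (poly p) = quad k xs Aw (poly p)" .
  qed
  have rel: "(real k + 1) * poly (S a b (Suc k)) (xs j)
     = ((2*real k+1)*(1-c)) * poly (S a b k) (xs j) + (-(real k - (2*real k+1)*c)) * poly (S a b (k-1)) (xs j)"
    if j: "1 \<le> j" "j \<le> k+1" for j
  proof -
    have "poly W (xs j) = 0" using Wn[OF j] .
    then show ?thesis unfolding W_def Wc_def by (simp add: algebra_simps)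
  qed
  have q: "quad k xs Aw (\<lambda>y. shifted_legendre a b (k + 1) y * shifted_legendre a b (k - 1) y)
     = (-(real k - (2*real k+1)*c))/(real k+1) * ((b-a)/(2*real k - 1))"
    by (rule cond2[OF ab k Aw0 exq rel])
  define N where "N = (b-a)/(2*real k - 1)"
  have Npos: "N > 0" unfolding N_def using ab k by (intro divide_pos_pos) auto
  have kk: "real k + 1 \<noteq> 0" by (simp add: add.commute)
  have e: "1 - (-(real k - (2*real k+1)*c))/(real k+1) = ((2*real k+1)*(1-c))/(real k+1)"
    using kk by (simp add: field_simps)
  have pos: "((2*real k+1)*(1-c))/(real k+1) > 0" using c1 k21 by (intro divide_pos_pos mult_pos_pos) auto
  have "N - quad k xs Aw (\<lambda>y. shifted_legendre a b (k + 1) y * shifted_legendre a b (k - 1) y)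
      = N * (1 - (-(real k - (2*real k+1)*c))/(real k+1))"
    unfolding q N_def[symmetric] by (simp add: algebra_simps)
  also have "\<dots> > 0" unfolding e by (rule mult_pos_pos[OF Npos pos])
  finally have cnd: "(b - a) / (2 * real k - 1)
      - quad k xs Aw (\<lambda>y. shifted_legendre a b (k + 1) y * shifted_legendre a b (k - 1) y) > 0"
    unfolding N_def .
  have "admissible_rule a b xs k Aw" unfolding admissible_rule_def using exq cnd by blast
  then show ?thesis using Aw0 by blast
qed

theorem theorem4p27:
  fixes N k :: nat and xb :: "nat \<Rightarrow> real" and x :: "nat \<Rightarrow> nat \<Rightarrow> real"
  assumes k: "k \<ge> 1"
    and cells: "\<forall>i<N. xb i < xb (Suc i)"
    and subdiv: "\<forall>i<N. x i 0 = xb i \<and> x i (k + 1) = xb (Suc i) \<and> (\<forall>j\<le>k. x i j < x i (Suc j))"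
    and rules: "\<forall>i<N. \<exists>A. admissible_rule (xb i) (xb (Suc i)) (x i) k A"
  shows "(\<exists>A :: nat \<Rightarrow> nat \<Rightarrow> real.
            \<forall>i<N. admissible_rule (xb i) (xb (Suc i)) (x i) k (A i) \<and> A i 0 = 0)
         \<longleftrightarrow>
         (\<forall>i<N. \<exists>c::real. c < 1 \<and>
            {x i j | j. 1 \<le> j \<and> j \<le> k} = {y. p_poly (xb i) (xb (Suc i)) k c y = 0})"
proof
  assume "\<exists>A :: nat \<Rightarrow> nat \<Rightarrow> real.
            \<forall>i<N. admissible_rule (xb i) (xb (Suc i)) (x i) k (A i) \<and> A i 0 = 0"
  then obtain A :: "nat \<Rightarrow> nat \<Rightarrow> real" where
    A: "\<forall>i<N. admissible_rule (xb i) (xb (Suc i)) (x i) k (A i) \<and> A i 0 = 0" by blast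
  show "\<forall>i<N. \<exists>c::real. c < 1 \<and>
            {x i j | j. 1 \<le> j \<and> j \<le> k} = {y. p_poly (xb i) (xb (Suc i)) k c y = 0}"
  proof (intro allI impI)
    fix i assume i: "i < N"
    show "\<exists>c::real. c < 1 \<and> {x i j | j. 1 \<le> j \<and> j \<le> k} = {y. p_poly (xb i) (xb (Suc i)) k c y = 0}"
      by (rule cell_fwd[where A = "A i"]) (use cells subdiv A i k in auto)
  qed
next
  assume H: "\<forall>i<N. \<exists>c::real. c < 1 \<and>
            {x i j | j. 1 \<le> j \<and> j \<le> k} = {y. p_poly (xb i) (xb (Suc i)) k c y = 0}"
  have "\<forall>i. \<exists>A. i < N \<longrightarrow> admissible_rule (xb i) (xb (Suc i)) (x i) k A \<and> A 0 = 0"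
  proof
    fix i
    show "\<exists>A. i < N \<longrightarrow> admissible_rule (xb i) (xb (Suc i)) (x i) k A \<and> A 0 = 0"
    proof (cases "i < N")
      case True
      then obtain c :: real where c: "c < 1" "{x i j | j. 1 \<le> j \<and> j \<le> k} = {y. p_poly (xb i) (xb (Suc i)) k c y = 0}"
        using H by blast
      have "\<exists>A. admissible_rule (xb i) (xb (Suc i)) (x i) k A \<and> A 0 = 0"
        by (rule cell_bwd[OF _ k _ _ c]) (use cells subdiv True in auto)
      then show ?thesis by blast
    next
      case False then show ?thesis by blast
    qed
  qed
  then obtain A where "\<forall>i. i < N \<longrightarrow> admissible_rule (xb i) (xb (Suc i)) (x i) k (A i) \<and> A i 0 = 0"
    by (metis choice)
  then show "\<exists>A :: nat \<Rightarrow> nat \<Rightarrow> real.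
            \<forall>i<N. admissible_rule (xb i) (xb (Suc i)) (x i) k (A i) \<and> A i 0 = 0" by blast
qed

end
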